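(* Let $a,k,d,e,f$ be integers with $1\le a\le k$, $1\le d\le k$, $1\le f\le d$, and $e=d$ or $2e=d$. Then for all integers $m,n\ge0$, $${}_db_{dk+e,\,da+f}(m,n)-{}_db_{dk+e,\,da+f-1}(m,n)=\begin{cases}{}_d\overline{b}_{dk+e,\,dk-da+d}\big(m-(da+f-1),\,n-m\big)&\text{if } f\le e,\\ {}_d\overline{b}_{dk+e,\,dk-da}\big(m-(da+f-1),\,n-m\big)&\text{if } f>e.\end{cases}$$
   Context: Partitions are finite non-increasing sequences of positive integers; $\phi_i$ is the number of occurrences of $i$ as a part. For an integer $N$ and integers $m,n$, ${}_db_{dk+e,N}(m,n)$ is the number of partitions of $n$ into exactly $m$ parts with $\phi_i+\phi_{i+1}<dk+e$ for all $i\ge1$, $\phi_1<N$, and $d\mid\phi_{2i}$ for all $i\ge1$; ${}_d\overline{b}_{dk+e,N}(m,n)$ is the number of partitions of $n$ into exactly $m$ parts with $\phi_i+\phi_{i+1}<dk+e$ for all $i\ge1$, $\phi_1<N$, and $d\mid\phi_{2i+1}$ for all $i\ge0$. Both counts are $0$ when $m<0$ or $n<0$. *)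

theory Defs
  imports Main
begin

text \<open>Partitions of n into exactly m parts, as non-increasing lists of positive integers.
  The multiplicity phi_i of i in xs is count_list xs i.\<close>
definition part_set :: "nat \<Rightarrow> nat \<Rightarrow> nat list set" where
  "part_set m n = {xs. sorted_wrt (\<ge>) xs \<and> (\<forall>x\<in>set xs. 0 < x) \<and> length xs = m \<and> sum_list xs = n}"

definition db :: "int \<Rightarrow> int \<Rightarrow> int \<Rightarrow> int \<Rightarrow> int \<Rightarrow> int" where
  "db d K N m n = (if m < 0 \<or> n < 0 then 0 else
     int (card {xs \<in> part_set (nat m) (nat n).
        (\<forall>i\<ge>1. int (count_list xs i + count_list xs (i+1)) < K) \<and>
        int (count_list xs 1) < N \<and>
        (\<forall>i\<ge>1. d dvd int (count_list xs (2*i)))}))"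

definition dbbar :: "int \<Rightarrow> int \<Rightarrow> int \<Rightarrow> int \<Rightarrow> int \<Rightarrow> int" where
  "dbbar d K N m n = (if m < 0 \<or> n < 0 then 0 else
     int (card {xs \<in> part_set (nat m) (nat n).
        (\<forall>i\<ge>1. int (count_list xs i + count_list xs (i+1)) < K) \<and>
        int (count_list xs 1) < N \<and>
        (\<forall>i. d dvd int (count_list xs (2*i+1)))}))"

end

theory Submission
  imports Defs
begin

definition gm :: "nat \<Rightarrow> nat list \<Rightarrow> nat list" where
  "gm c ys = map Suc ys @ replicate c 1"

lemma count_map_Suc0: "count_list (map Suc ys) 0 = 0"
  by (induction ys) auto

lemma count_map_Suc: "count_list (map Suc ys) (Suc j) = count_list ys j"
  by (induction ys) auto

lemma count_rep1: "count_list (replicate c (Suc 0)) i = (if i = Suc 0 then c else 0)"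
  by (induction c) auto

lemma sorted_rep: "sorted_wrt (\<ge>) (replicate c (x::nat))"
  by (induction c) auto

lemma count_gm:
  "count_list (gm c ys) (Suc j) = count_list ys j + (if j = 0 then c else 0)"
  by (simp add: gm_def count_map_Suc count_rep1)

lemma sum_map_Suc: "sum_list (map Suc ys) = sum_list ys + length ys"
  by (induction ys) auto

lemma finite_part_set: "finite (part_set m n)"
proof -
  have "part_set m n \<subseteq> {xs. set xs \<subseteq> {..n} \<and> length xs = m}"
    unfolding part_set_def using member_le_sum_list by fastforce
  thus ?thesis using finite_lists_length_eq[of "{..n}" m] finite_subset by blast
qed

lemma gm_part:
  assumes pos: "\<forall>y\<in>set ys. 0 < y" and "c \<le> m" "m \<le> n"
  shows "gm c ys \<in> part_set m n \<longleftrightarrow> ys \<in> part_set (m - c) (n - m)"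
proof -
  have s: "sorted_wrt (\<ge>) (gm c ys) \<longleftrightarrow> sorted_wrt (\<ge>) ys"
    using pos by (auto simp: gm_def sorted_wrt_append sorted_wrt_map sorted_rep)
  have p: "\<forall>x\<in>set (gm c ys). 0 < x" by (auto simp: gm_def)
  have l: "length (gm c ys) = length ys + c" by (simp add: gm_def)
  have su: "sum_list (gm c ys) = sum_list ys + length ys + c"
    by (simp add: gm_def sum_map_Suc sum_list_replicate)
  show ?thesis unfolding part_set_def using s p l su pos assms(2,3) by auto
qed

lemma sorted_split1:
  assumes "sorted_wrt (\<ge>) xs" "\<forall>x\<in>set xs. (0::nat) < x"
  shows "xs = filter (\<lambda>x. x \<noteq> 1) xs @ replicate (count_list xs 1) 1"
  using assms
proof (induction xs)
  case Nil then show ?case by simp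
next
  case (Cons x xs)
  show ?case
  proof (cases "x = 1")
    case True
    then have "\<forall>y\<in>set xs. y = 1" using Cons.prems by fastforce
    then have xr: "xs = replicate (length xs) 1" by (simp add: replicate_length_same)
    have f0: "filter (\<lambda>x. x \<noteq> 1) (x#xs) = []" using \<open>\<forall>y\<in>set xs. y = 1\<close> True by (simp add: filter_empty_conv)
    have cl: "count_list xs 1 = length xs" using \<open>\<forall>y\<in>set xs. y = 1\<close>
      by (metis count_list_eq_length_filter filter_True)
    have c1: "count_list (x#xs) 1 = Suc (length xs)" using True cl by simp
    have "x # xs = replicate (Suc (length xs)) 1" using True xr by (metis replicate_Suc)
    then show ?thesis using f0 c1 by simp
  next
    case False
    then show ?thesis using Cons by auto
  qed
qed

definition CC :: "int \<Rightarrow> nat list \<Rightarrow> bool" where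
  "CC K xs = (\<forall>i\<ge>1. int (count_list xs i + count_list xs (i+1)) < K)"
definition EV :: "int \<Rightarrow> nat list \<Rightarrow> bool" where
  "EV d xs = (\<forall>i\<ge>1. d dvd int (count_list xs (2*i)))"
definition OD :: "int \<Rightarrow> nat list \<Rightarrow> bool" where
  "OD d xs = (\<forall>i. d dvd int (count_list xs (2*i+1)))"

lemma gm_CC: assumes z: "count_list ys 0 = 0" shows "CC K (gm c ys) \<longleftrightarrow> CC K ys \<and> int c + int (count_list ys 1) < K"
proof
  assume h: "CC K (gm c ys)"
  have "CC K ys"
    unfolding CC_def
  proof (intro allI impI)
    fix i :: nat assume "1 \<le> i"
    have "int (count_list (gm c ys) (Suc i) + count_list (gm c ys) (Suc i + 1)) < K"
      using h unfolding CC_def by auto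
    thus "int (count_list ys i + count_list ys (i + 1)) < K"
      using \<open>1 \<le> i\<close> by (simp add: count_gm)
  qed
  moreover have "int (count_list (gm c ys) 1 + count_list (gm c ys) (1 + 1)) < K"
    using h unfolding CC_def by blast
  hence "int c + int (count_list ys 1) < K" using z
    by (simp add: count_gm[of c ys 0, simplified] count_gm[of c ys 1, simplified] numeral_2_eq_2)
  ultimately show "CC K ys \<and> int c + int (count_list ys 1) < K" by blast
next
  assume h: "CC K ys \<and> int c + int (count_list ys 1) < K"
  show "CC K (gm c ys)" unfolding CC_def
  proof (intro allI impI)
    fix i :: nat assume "1 \<le> i"
    then obtain j where j: "i = Suc j" by (cases i) auto
    show "int (count_list (gm c ys) i + count_list (gm c ys) (i + 1)) < K"
    proof (cases "j = 0")
      case True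
      then show ?thesis using h j z
        by (simp add: count_gm[of c ys 0, simplified] count_gm[of c ys 1, simplified] numeral_2_eq_2)
    next
      case False
      then have "int (count_list ys j + count_list ys (j + 1)) < K" using h unfolding CC_def by auto
      then show ?thesis using j False by (simp add: count_gm)
    qed
  qed
qed

lemma gm_count1: "count_list (gm c ys) 1 = c + count_list ys 0"
  using count_gm[of c ys 0] by simp

lemma gm_EV: "EV d (gm c ys) \<longleftrightarrow> OD d ys"
proof -
  have "\<And>i. count_list (gm c ys) (2 * Suc i) = count_list ys (2*i+1)"
    using count_gm[of c ys "2*i+1" for i] by simp
  note h = this
  show ?thesis unfolding EV_def OD_def
  proof
    assume H: "\<forall>i\<ge>1. d dvd int (count_list (gm c ys) (2 * i))"
    show "\<forall>i. d dvd int (count_list ys (2 * i + 1))"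
    proof
      fix i :: nat
      have "d dvd int (count_list (gm c ys) (2 * Suc i))" using H by (metis le_add1 plus_1_eq_Suc)
      thus "d dvd int (count_list ys (2 * i + 1))" using h by simp
    qed
  next
    assume H: "\<forall>i. d dvd int (count_list ys (2 * i + 1))"
    show "\<forall>i\<ge>1. d dvd int (count_list (gm c ys) (2 * i))"
    proof (intro allI impI)
      fix i :: nat assume "1 \<le> i"
      then obtain j where j: "i = Suc j" by (cases i) auto
      show "d dvd int (count_list (gm c ys) (2 * i))" using H h j by simp
    qed
  qed
qed

lemma key_card:
  assumes "c \<le> m" "m \<le> n"
  shows "card {xs \<in> part_set m n. CC K xs \<and> count_list xs 1 = c \<and> EV d xs}
       = card {ys \<in> part_set (m - c) (n - m). CC K ys \<and> int c + int (count_list ys 1) < K \<and> OD d ys}"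
    (is "card ?S = card ?T")
proof -
  have inj: "inj_on (gm c) ?T" unfolding inj_on_def gm_def by auto
  have img: "gm c ` ?T = ?S"
  proof
    show "gm c ` ?T \<subseteq> ?S"
    proof
      fix x assume "x \<in> gm c ` ?T"
      then obtain ys where ys: "ys \<in> ?T" "x = gm c ys" by blast
      have pos: "\<forall>y\<in>set ys. 0 < y" using ys unfolding part_set_def by auto
      have "count_list ys 0 = 0" using pos by (auto simp: count_list_0_iff)
      thus "x \<in> ?S" using ys gm_part[OF pos assms] gm_CC[OF \<open>count_list ys 0 = 0\<close>] gm_EV gm_count1 by auto
    qed
  next
    show "?S \<subseteq> gm c ` ?T"
    proof
      fix xs assume xs: "xs \<in> ?S"
      define ys where "ys = map (\<lambda>x. x - 1) (filter (\<lambda>x. x \<noteq> 1) xs)"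
      have sp: "sorted_wrt (\<ge>) xs" "\<forall>x\<in>set xs. 0 < x" using xs unfolding part_set_def by auto
      have pos: "\<forall>y\<in>set ys. 0 < y" using sp(2) unfolding ys_def by fastforce
      have "map Suc ys = filter (\<lambda>x. x \<noteq> 1) xs"
        unfolding ys_def using sp(2) by (induction xs) auto
      hence eq: "xs = gm c ys" using sorted_split1[OF sp] xs unfolding gm_def by simp
      have c0: "count_list ys 0 = 0" using pos by (auto simp: count_list_0_iff)
      have "ys \<in> ?T" using xs unfolding eq using gm_part[OF pos assms] gm_CC[OF c0] gm_EV gm_count1 c0 by auto
      thus "xs \<in> gm c ` ?T" using eq by blast
    qed
  qed
  show ?thesis using card_image[OF inj] img by simp
qed

lemma arith_case:
  fixes a k d e f x :: int
  assumes "1 \<le> a" "a \<le> k" "1 \<le> d" "d \<le> k" "1 \<le> f" "f \<le> d"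
    and "e = d \<or> 2 * e = d" and "d dvd x"
  shows "(d*a+f-1) + x < d*k+e \<longleftrightarrow> x < (if f \<le> e then d*k-d*a+d else d*k-d*a)"
proof -
  obtain q where q: "x = d*q" using assms(8) by blast
  have e1: "1 \<le> e" "e \<le> d" using assms(3,7) by auto
  have dk1: "d*(k-a+1) = d*k-d*a+d" "d*(k-a) = d*k-d*a" by (simp_all add: algebra_simps)
  show ?thesis
  proof (cases "f \<le> e")
    case True
    have "(d*a+f-1) + x < d*k+e \<longleftrightarrow> x < d*k-d*a+d"
    proof
      assume "(d*a+f-1) + x < d*k+e" thus "x < d*k-d*a+d" using e1 assms(5) by linarith
    next
      assume "x < d*k-d*a+d"
      hence "d*q < d*(k-a+1)" using q dk1 by simp
      hence "q < k-a+1" using assms(3) by simp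
      hence "q \<le> k - a" by simp
      hence "d*q \<le> d*(k-a)" using assms(3) by simp
      thus "(d*a+f-1) + x < d*k+e" using q dk1 True by linarith
    qed
    thus ?thesis using True by simp
  next
    case False
    have "(d*a+f-1) + x < d*k+e \<longleftrightarrow> x < d*k-d*a"
    proof
      assume "(d*a+f-1) + x < d*k+e" thus "x < d*k-d*a" using False by linarith
    next
      assume "x < d*k-d*a"
      hence "d*q < d*(k-a)" using q dk1 by simp
      hence "q < k-a" using assms(3) by simp
      hence "q \<le> k - a - 1" by simp
      hence "d*q \<le> d*(k-a-1)" using assms(3) by simp
      moreover have "d*(k-a-1) = d*k-d*a-d" by (simp add: algebra_simps)
      ultimately show "(d*a+f-1) + x < d*k+e" using q assms(6) e1 by linarith
    qed
    thus ?thesis using False by simp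
  qed
qed

theorem mainTheorem4:
  fixes a k d e f m n :: int
  assumes "1 \<le> a" "a \<le> k" "1 \<le> d" "d \<le> k" "1 \<le> f" "f \<le> d"
    and "e = d \<or> 2 * e = d"
    and "0 \<le> m" "0 \<le> n"
  shows "db d (d*k+e) (d*a+f) m n - db d (d*k+e) (d*a+f-1) m n =
    (if f \<le> e then dbbar d (d*k+e) (d*k-d*a+d) (m-(d*a+f-1)) (n-m)
     else dbbar d (d*k+e) (d*k-d*a) (m-(d*a+f-1)) (n-m))"
proof -
  define K where "K = d*k+e"
  define N where "N = d*a+f"
  define c where "c = nat (d*a+f-1)"
  define N' where "N' = (if f \<le> e then d*k-d*a+d else d*k-d*a)"
  have da: "0 < d*a" using assms(1,3) by simp
  have N1: "N - 1 = int c" unfolding N_def c_def using da assms(5) by simp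
  have RHS: "(if f \<le> e then dbbar d (d*k+e) (d*k-d*a+d) (m-(d*a+f-1)) (n-m)
     else dbbar d (d*k+e) (d*k-d*a) (m-(d*a+f-1)) (n-m)) = dbbar d K N' (m - int c) (n - m)"
    unfolding K_def N'_def using N1 N_def by simp
  define P where "P = part_set (nat m) (nat n)"
  define A where "A = {xs \<in> P. CC K xs \<and> int (count_list xs 1) < N \<and> EV d xs}"
  define B where "B = {xs \<in> P. CC K xs \<and> int (count_list xs 1) < N - 1 \<and> EV d xs}"
  define S where "S = {xs \<in> P. CC K xs \<and> count_list xs 1 = c \<and> EV d xs}"
  have fin: "finite A" "finite B" "finite S" unfolding A_def B_def S_def P_def
    using finite_part_set by auto
  have AU: "A = B \<union> S" "B \<inter> S = {}" unfolding A_def B_def S_def using N1 by auto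
  have cardA: "card A = card B + card S" using AU fin card_Un_disjoint by metis
  have LHS: "db d K N m n - db d K (N-1) m n = int (card S)"
    using assms(8,9) cardA unfolding db_def A_def B_def P_def CC_def EV_def by simp
  have goal: "int (card S) = dbbar d K N' (m - int c) (n - m)"
  proof (cases "nat m < c \<or> nat n < nat m")
    case True
    have "S = {}"
    proof -
      { fix xs assume "xs \<in> S"
        hence xs: "xs \<in> part_set (nat m) (nat n)" "count_list xs 1 = c" unfolding S_def P_def by auto
        have "count_list xs 1 \<le> length xs" by (rule count_le_length)
        moreover have "length xs \<le> sum_list xs"
        proof -
          have "\<forall>x\<in>set xs. 1 \<le> x" using xs unfolding part_set_def by auto
          hence "sum_list (map (\<lambda>_. 1::nat) xs) \<le> sum_list xs"
            by (metis map_ident sum_list_mono)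
          thus ?thesis by (simp add: sum_list_triv)
        qed
        ultimately have False using xs True unfolding part_set_def by auto }
      thus ?thesis by blast
    qed
    moreover have "m - int c < 0 \<or> n - m < 0" using True assms(8,9) by auto
    ultimately show ?thesis unfolding dbbar_def by auto
  next
    case False
    have kc: "card S = card {ys \<in> part_set (nat m - c) (nat n - nat m). CC K ys \<and> int c + int (count_list ys 1) < K \<and> OD d ys}"
      unfolding S_def P_def using key_card False by auto
    have "{ys \<in> part_set (nat m - c) (nat n - nat m). CC K ys \<and> int c + int (count_list ys 1) < K \<and> OD d ys}
        = {ys \<in> part_set (nat m - c) (nat n - nat m). CC K ys \<and> int (count_list ys 1) < N' \<and> OD d ys}"
    proof -
      { fix ys assume "OD d ys"
        hence "d dvd int (count_list ys 1)" unfolding OD_def by (metis mult_0_right add_0)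
        hence "int c + int (count_list ys 1) < K \<longleftrightarrow> int (count_list ys 1) < N'"
          using arith_case[OF assms(1-7)] N1 N_def unfolding K_def N'_def by simp }
      thus ?thesis by blast
    qed
    moreover have "nat (m - int c) = nat m - c" "nat (n - m) = nat n - nat m" using False assms(8,9) by auto
    moreover have "\<not> (m - int c < 0 \<or> n - m < 0)" using False assms(8,9) by auto
    ultimately show ?thesis using kc unfolding dbbar_def CC_def OD_def by presburger
  qed
  show ?thesis using LHS goal RHS unfolding K_def N_def by simp
qed

end
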